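(* In the case $m=1$ with $\beta_1=l$ (so $\alpha_1+\dots+\alpha_l=l$, $k=l$, $n=l+1$), the regular graph $\mathcal G(\boldsymbol\nu,\boldsymbol\rho)$ satisfies $v_r\ge u_r$ for all $0\le r<l$, and is therefore proper, provided $$\rho_r\ge\frac{\alpha_r+l}{\alpha_{r+1}+l}\quad\text{for } r=1,\dots,l,$$ where $\alpha_{l+1}=\alpha_1$.
   Context: Setting: $l\ge1$, $m=1$, weights $\alpha_1,\dots,\alpha_l\ge0$ with $\alpha_1+\dots+\alpha_l=l=\beta_1$, $\boldsymbol\nu=(\alpha_1,\dots,\alpha_l,-l)$, $\boldsymbol\rho=(\rho_1,\dots,\rho_l)$ with all $\rho_i>1$. Indices of $\alpha,\rho,u,v$ are taken modulo $l$. $\sigma_0=1$, $\sigma_r=\rho_1\cdots\rho_r$ ($1\le r\le l$), $\tau=\rho_1\cdots\rho_l$, $\sigma_{sl+h}=\tau^s\sigma_h$. Points ${\bf a}_r^t=\tau^t\sigma_r(1,u_r)$, ${\bf b}_r^t=\tau^t\sigma_r(1,v_r)$; segments $\mathcal A_r^t=[{\bf a}_r^t,{\bf b}_{r+l}^t]$ and $\mathcal B_r^t=[{\bf b}_r^t,{\bf a}_{r+1}^t]$ ($0\le r<l$, $t\in\mathbb Z$); $u_r,v_r$ are the unique numbers for which each $\mathcal A_r^t$ has slope $\alpha_{r+1}$ and each $\mathcal B_r^t$ has slope $-l$; $\mathcal G(\boldsymbol\nu,\boldsymbol\rho)=\{{\bf 0}\}\cup\bigcup_{t,r}(\mathcal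 A_r^t\cup\mathcal B_r^t)$, the union of graphs of functions $P_1\le\dots\le P_{l+1}$ on $[0,\infty)$. Proper: for each $q>0$ and each $i$ with $P_i(q)<P_{i+1}(q)$, the sum of the slopes of $P_1,\dots,P_i$ immediately to the left of $q$ does not exceed the corresponding sum immediately to the right of $q$. *)

theory Defs
  imports Complex_Main
begin

text \<open>The weights alpha_1..alpha_l and the ratios
rho_1..rho_l are given as functions on nat, used at indices 1..l; the unknowns
u_0..u_{l-1}, v_0..v_{l-1} are functions on nat, used at indices 0..l-1.
All indices of alpha, rho, u, v are read modulo l.\<close>

definition cyc :: "nat \<Rightarrow> nat \<Rightarrow> nat" where
  "cyc l r = (if r mod l = 0 then l else r mod l)"

definition tau :: "nat \<Rightarrow> (nat \<Rightarrow> real) \<Rightarrow> real" where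
  "tau l \<rho> = (\<Prod>i=1..l. \<rho> i)"

definition sig :: "nat \<Rightarrow> (nat \<Rightarrow> real) \<Rightarrow> nat \<Rightarrow> real" where
  "sig l \<rho> n = tau l \<rho> ^ (n div l) * (\<Prod>i=1..(n mod l). \<rho> i)"

definition pa :: "nat \<Rightarrow> (nat \<Rightarrow> real) \<Rightarrow> (nat \<Rightarrow> real) \<Rightarrow> int \<Rightarrow> nat \<Rightarrow> real \<times> real" where
  "pa l \<rho> u t r = (tau l \<rho> powi t * sig l \<rho> r, tau l \<rho> powi t * sig l \<rho> r * u (r mod l))"

definition pb :: "nat \<Rightarrow> (nat \<Rightarrow> real) \<Rightarrow> (nat \<Rightarrow> real) \<Rightarrow> int \<Rightarrow> nat \<Rightarrow> real \<times> real" where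
  "pb l \<rho> v t r = (tau l \<rho> powi t * sig l \<rho> r, tau l \<rho> powi t * sig l \<rho> r * v (r mod l))"

text \<open>A segment is represented by its pair of endpoints (left endpoint first).
segA: A_r^t = [a_r^t, b_{r+l}^t];  segB: B_r^t = [b_r^t, a_{r+1}^t].\<close>
definition segA :: "nat \<Rightarrow> (nat \<Rightarrow> real) \<Rightarrow> (nat \<Rightarrow> real) \<Rightarrow> (nat \<Rightarrow> real) \<Rightarrow> int \<Rightarrow> nat
    \<Rightarrow> (real \<times> real) \<times> (real \<times> real)" where
  "segA l \<rho> u v t r = (pa l \<rho> u t r, pb l \<rho> v t (r + l))"

definition segB :: "nat \<Rightarrow> (nat \<Rightarrow> real) \<Rightarrow> (nat \<Rightarrow> real) \<Rightarrow> (nat \<Rightarrow> real) \<Rightarrow> int \<Rightarrow> nat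
    \<Rightarrow> (real \<times> real) \<times> (real \<times> real)" where
  "segB l \<rho> u v t r = (pb l \<rho> v t r, pa l \<rho> u t (r + 1))"

definition slope :: "(real \<times> real) \<times> (real \<times> real) \<Rightarrow> real" where
  "slope s = (snd (snd s) - snd (fst s)) / (fst (snd s) - fst (fst s))"

definition seg :: "nat \<Rightarrow> (nat \<Rightarrow> real) \<Rightarrow> (nat \<Rightarrow> real) \<Rightarrow> (nat \<Rightarrow> real) \<Rightarrow> int \<Rightarrow> nat \<Rightarrow> bool
    \<Rightarrow> (real \<times> real) \<times> (real \<times> real)" where
  "seg l \<rho> u v t r k = (if k then segA l \<rho> u v t r else segB l \<rho> u v t r)"

definition seg_val :: "(real \<times> real) \<times> (real \<times> real) \<Rightarrow> real \<Rightarrow> real" where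
  "seg_val s q = snd (fst s) + (q - fst (fst s)) * slope s"

text \<open>Number of segments (counted with multiplicity, each segment taken with its
half-open abscissa range [left, right)) meeting the vertical line x = q at height \<le> y.\<close>
definition cnt :: "nat \<Rightarrow> (nat \<Rightarrow> real) \<Rightarrow> (nat \<Rightarrow> real) \<Rightarrow> (nat \<Rightarrow> real) \<Rightarrow> real \<Rightarrow> real \<Rightarrow> nat" where
  "cnt l \<rho> u v q y = card {(t, r, k). r < l \<and>
      fst (fst (seg l \<rho> u v t r k)) \<le> q \<and> q < fst (snd (seg l \<rho> u v t r k)) \<and>
      seg_val (seg l \<rho> u v t r k) q \<le> y}"

text \<open>P_i(q): the i-th smallest height (with multiplicity) of the graph G(nu, rho)
over q > 0, i.e. the functions P_1 \<le> ... \<le> P_{l+1} whose graphs make up G.\<close>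
definition Pfun :: "nat \<Rightarrow> (nat \<Rightarrow> real) \<Rightarrow> (nat \<Rightarrow> real) \<Rightarrow> (nat \<Rightarrow> real) \<Rightarrow> nat \<Rightarrow> real \<Rightarrow> real" where
  "Pfun l \<rho> u v i q = Inf {y. i \<le> cnt l \<rho> u v q y}"

definition Psum :: "nat \<Rightarrow> (nat \<Rightarrow> real) \<Rightarrow> (nat \<Rightarrow> real) \<Rightarrow> (nat \<Rightarrow> real) \<Rightarrow> nat \<Rightarrow> real \<Rightarrow> real" where
  "Psum l \<rho> u v i q = (\<Sum>j=1..i. Pfun l \<rho> u v j q)"

definition proper :: "nat \<Rightarrow> (nat \<Rightarrow> real) \<Rightarrow> (nat \<Rightarrow> real) \<Rightarrow> (nat \<Rightarrow> real) \<Rightarrow> bool" where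
  "proper l \<rho> u v \<longleftrightarrow> (\<forall>q>0. \<forall>i\<in>{1..l}.
      Pfun l \<rho> u v i q < Pfun l \<rho> u v (i + 1) q \<longrightarrow>
      (\<exists>dl dr. (Psum l \<rho> u v i has_real_derivative dl) (at_left q) \<and>
               (Psum l \<rho> u v i has_real_derivative dr) (at_right q) \<and> dl \<le> dr))"

end

theory Submission
  imports Defs
begin


definition ost :: "'j set \<Rightarrow> ('j \<Rightarrow> real) \<Rightarrow> nat \<Rightarrow> real" where
  "ost J f m = Inf {y. m \<le> card {j\<in>J. f j \<le> y}}"

lemma card_le_mono_y:
  fixes f :: "'j \<Rightarrow> real"
  assumes "finite J" "y \<le> y'"
  shows "card {j\<in>J. f j \<le> y} \<le> card {j\<in>J. f j \<le> y'}"
  using assms by (intro card_mono) (auto intro: order_trans)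

lemma ost_set:
  fixes f :: "'j \<Rightarrow> real"
  assumes fin: "finite J" and m: "1 \<le> m" "m \<le> card J"
  shows "\<exists>\<theta>. {y. m \<le> card {j\<in>J. f j \<le> y}} = {\<theta>..}"
proof -
  define W where "W = {w\<in>f ` J. m \<le> card {j\<in>J. f j \<le> w}}"
  have Jne: "J \<noteq> {}" using m by auto
  have "finite W" unfolding W_def using fin by auto
  moreover have "Max (f ` J) \<in> W"
  proof -
    have "{j\<in>J. f j \<le> Max (f ` J)} = J" using fin by auto
    thus ?thesis unfolding W_def using fin Jne m by auto
  qed
  ultimately have Wne: "W \<noteq> {}" by auto
  define \<theta> where "\<theta> = Min W"
  have thW: "\<theta> \<in> W" unfolding \<theta>_def using \<open>finite W\<close> Wne by simp
  have "{y. m \<le> card {j\<in>J. f j \<le> y}} = {\<theta>..}"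
  proof (intro set_eqI iffI)
    fix y assume "y \<in> {y. m \<le> card {j\<in>J. f j \<le> y}}"
    hence my: "m \<le> card {j\<in>J. f j \<le> y}" by simp
    have ne: "{j\<in>J. f j \<le> y} \<noteq> {}"
    proof
      assume "{j\<in>J. f j \<le> y} = {}"
      hence "card {j\<in>J. f j \<le> y} = 0" by (simp only: card.empty)
      thus False using my m by simp
    qed
    define w where "w = Max (f ` {j\<in>J. f j \<le> y})"
    have fin2: "finite (f ` {j\<in>J. f j \<le> y})" using fin by auto
    have wy: "w \<le> y" unfolding w_def using fin2 ne by auto
    have win: "w \<in> f ` {j\<in>J. f j \<le> y}" unfolding w_def using fin2 ne by simp
    have "{j\<in>J. f j \<le> w} = {j\<in>J. f j \<le> y}"
      using wy fin2 unfolding w_def by (auto intro: Max_ge)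
    hence "w \<in> W" unfolding W_def using win my by auto
    hence "\<theta> \<le> w" unfolding \<theta>_def using \<open>finite W\<close> by simp
    thus "y \<in> {\<theta>..}" using wy by simp
  next
    fix y assume "y \<in> {\<theta>..}"
    hence "\<theta> \<le> y" by simp
    hence "card {j\<in>J. f j \<le> \<theta>} \<le> card {j\<in>J. f j \<le> y}" by (rule card_le_mono_y[OF fin])
    moreover have "m \<le> card {j\<in>J. f j \<le> \<theta>}" using thW unfolding W_def by simp
    ultimately show "y \<in> {y. m \<le> card {j\<in>J. f j \<le> y}}" by simp
  qed
  thus ?thesis by blast
qed

lemma ost_props:
  fixes f :: "'j \<Rightarrow> real"
  assumes fin: "finite J" and m: "1 \<le> m" "m \<le> card J"
  shows "m \<le> card {j\<in>J. f j \<le> ost J f m}"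
    and "\<And>y. m \<le> card {j\<in>J. f j \<le> y} \<Longrightarrow> ost J f m \<le> y"
proof -
  obtain \<theta> where th: "{y. m \<le> card {j\<in>J. f j \<le> y}} = {\<theta>..}" using ost_set[OF assms] by blast
  have "ost J f m = \<theta>" unfolding ost_def th by simp
  then show "m \<le> card {j\<in>J. f j \<le> ost J f m}" using th by auto
  show "\<And>y. m \<le> card {j\<in>J. f j \<le> y} \<Longrightarrow> ost J f m \<le> y"
    using th \<open>ost J f m = \<theta>\<close> by auto
qed



lemma ost_gap:
  fixes f :: "'j \<Rightarrow> real"
  assumes fin: "finite J" and i: "1 \<le> i" "i + 1 \<le> card J"
    and lt: "ost J f i < ost J f (i+1)"
  shows "card {j\<in>J. f j \<le> ost J f i} = i"
proof -
  have a: "i \<le> card {j\<in>J. f j \<le> ost J f i}" using ost_props(1)[OF fin i(1)] i by simp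
  have "\<not> (i + 1 \<le> card {j\<in>J. f j \<le> ost J f i})"
  proof
    assume "i + 1 \<le> card {j\<in>J. f j \<le> ost J f i}"
    hence "ost J f (i+1) \<le> ost J f i" using ost_props(2)[OF fin _ i(2)] by simp
    thus False using lt by simp
  qed
  thus ?thesis using a by simp
qed

lemma ost_restrict:
  fixes f :: "'j \<Rightarrow> real"
  assumes fin: "finite J" and K: "K \<subseteq> J" and m: "m \<le> card K"
    and sep: "\<forall>a\<in>K. \<forall>b\<in>J-K. f a < f b"
  shows "ost J f m = ost K f m"
proof -
  have finK: "finite K" using fin K finite_subset by auto
  have "{y. m \<le> card {j\<in>J. f j \<le> y}} = {y. m \<le> card {j\<in>K. f j \<le> y}}"
  proof (intro set_eqI)
    fix y
    show "(y \<in> {y. m \<le> card {j\<in>J. f j \<le> y}}) = (y \<in> {y. m \<le> card {j\<in>K. f j \<le> y}})"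
    proof (cases "\<exists>b\<in>J-K. f b \<le> y")
      case True
      then obtain b where b: "b \<in> J-K" "f b \<le> y" by blast
      have "\<forall>a\<in>K. f a \<le> y" using sep b by (meson less_le_trans less_imp_le)
      hence "{j\<in>K. f j \<le> y} = K" by blast
      moreover have "card {j\<in>K. f j \<le> y} \<le> card {j\<in>J. f j \<le> y}"
        using fin K by (intro card_mono) auto
      ultimately show ?thesis using m by auto
    next
      case False
      hence "{j\<in>J. f j \<le> y} = {j\<in>K. f j \<le> y}" using K by blast
      thus ?thesis by simp
    qed
  qed
  thus ?thesis unfolding ost_def by simp
qed


lemma ost_sum:
  fixes f :: "'j \<Rightarrow> real"
  assumes "finite K"
  shows "(\<Sum>m=1..card K. ost K f m) = (\<Sum>j\<in>K. f j)"
  using assms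
proof (induction K rule: finite_remove_induct)
  case empty
  then show ?case by simp
next
  case (remove K)
  have fi: "finite (f ` K)" "f ` K \<noteq> {}" using remove(1,2) by auto
  obtain k0 where k0: "k0 \<in> K" "f k0 = Max (f ` K)"
    using Max_in[OF fi] by auto
  have mx: "\<forall>j\<in>K. f j \<le> f k0" using k0 fi by auto
  define n where "n = card K - 1"
  have "card K > 0" using remove(1,2) by (simp add: card_gt_0_iff)
  hence cK: "card K = Suc n" unfolding n_def by simp
  have cK0: "card (K - {k0}) = n" using cK k0 remove(1) by simp
  have eq: "ost K f m = ost (K - {k0}) f m" if "m \<le> n" for m
  proof -
    have "{y. m \<le> card {j\<in>K. f j \<le> y}} = {y. m \<le> card {j\<in>K-{k0}. f j \<le> y}}"
    proof (intro set_eqI)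
      fix y
      show "(y \<in> {y. m \<le> card {j\<in>K. f j \<le> y}}) = (y \<in> {y. m \<le> card {j\<in>K-{k0}. f j \<le> y}})"
      proof (cases "f k0 \<le> y")
        case True
        hence "\<forall>j\<in>K. f j \<le> y" using mx by (meson order_trans)
        hence "{j\<in>K. f j \<le> y} = K" "{j\<in>K-{k0}. f j \<le> y} = K - {k0}" by blast+
        thus ?thesis using cK cK0 that by simp
      next
        case False
        hence "{j\<in>K. f j \<le> y} = {j\<in>K-{k0}. f j \<le> y}" by auto
        thus ?thesis by simp
      qed
    qed
    thus ?thesis unfolding ost_def by simp
  qed
  have last: "ost K f (Suc n) = f k0"
  proof -
    have "{y. Suc n \<le> card {j\<in>K. f j \<le> y}} = {f k0..}"
    proof (intro set_eqI iffI)
      fix y assume "y \<in> {y. Suc n \<le> card {j\<in>K. f j \<le> y}}"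
      hence "card K \<le> card {j\<in>K. f j \<le> y}" using cK by simp
      moreover have "{j\<in>K. f j \<le> y} \<subseteq> K" by blast
      ultimately have "{j\<in>K. f j \<le> y} = K" using remove(1) card_seteq by blast
      thus "y \<in> {f k0..}" using k0(1) by blast
    next
      fix y assume "y \<in> {f k0..}"
      hence "\<forall>j\<in>K. f j \<le> y" using mx by (meson order_trans atLeast_iff)
      hence "{j\<in>K. f j \<le> y} = K" by blast
      thus "y \<in> {y. Suc n \<le> card {j\<in>K. f j \<le> y}}" using cK by simp
    qed
    thus ?thesis unfolding ost_def by simp
  qed
  have "(\<Sum>m=1..card K. ost K f m) = (\<Sum>m=1..n. ost K f m) + ost K f (Suc n)"
    using cK by simp
  also have "(\<Sum>m=1..n. ost K f m) = (\<Sum>m=1..n. ost (K-{k0}) f m)"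
    using eq by (intro sum.cong) auto
  also have "\<dots> = (\<Sum>j\<in>K-{k0}. f j)" using remove(4)[OF k0(1)] cK0 by simp
  also have "(\<Sum>j\<in>K-{k0}. f j) + ost K f (Suc n) = (\<Sum>j\<in>K. f j)"
    using last k0 remove(1) by (simp add: sum.remove)
  finally show ?case .
qed



lemma cyc_lt: "r < l \<Longrightarrow> cyc l (r+1) = r + 1"
  unfolding cyc_def
proof -
  assume r: "r < l"
  show "(if (r + 1) mod l = 0 then l else (r + 1) mod l) = r + 1"
  proof (cases "r + 1 = l")
    case True then show ?thesis by simp
  next
    case False then have "r + 1 < l" using r by simp
    then show ?thesis by simp
  qed
qed

lemma cyc_lt2: "r < l \<Longrightarrow> cyc l (r+2) = (r+1) mod l + 1"
  unfolding cyc_def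
proof -
  assume r: "r < l"
  show "(if (r + 2) mod l = 0 then l else (r + 2) mod l) = (r+1) mod l + 1"
  proof (cases "r + 1 = l")
    case True
    show ?thesis
    proof (cases "l = 1")
      case True then show ?thesis using \<open>r+1 = l\<close> by simp
    next
      case False
      have e: "r + 2 = 1 + l" using \<open>r+1 = l\<close> by simp
      have "l > 1" using False r by simp
      have "(1 + l) mod l = 1 mod l" by (rule mod_add_self2)
      hence "(1 + l) mod l = 1" using \<open>l > 1\<close> by simp
      hence "(r+2) mod l = 1" using e by simp
      then show ?thesis using \<open>r+1 = l\<close> by simp
    qed
  next
    case False then have r1: "r + 1 < l" using r by simp
    show ?thesis
    proof (cases "r + 2 = l")
      case True then show ?thesis using r1 by simp
    next
      case False then have "r + 2 < l" using r1 by simp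
      then show ?thesis using r1 by simp
    qed
  qed
qed

lemma sig_lt: "r < l \<Longrightarrow> sig l \<rho> r = (\<Prod>i=1..r. \<rho> i)"
  unfolding sig_def by simp

lemma sig_0: "l \<ge> 1 \<Longrightarrow> sig l \<rho> 0 = 1"
  unfolding sig_def by simp

lemma sig_l: "l \<ge> 1 \<Longrightarrow> sig l \<rho> l = tau l \<rho>"
  unfolding sig_def by simp

lemma sig_rl: "r < l \<Longrightarrow> sig l \<rho> (r+l) = tau l \<rho> * sig l \<rho> r"
proof -
  assume r: "r < l"
  have "(r+l) div l = 1" "(r+l) mod l = r" using r by auto
  thus ?thesis unfolding sig_def using r by simp
qed

lemma sig_Suc: "r < l \<Longrightarrow> sig l \<rho> (Suc r) = sig l \<rho> r * \<rho> (Suc r)"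
proof -
  assume r: "r < l"
  have "sig l \<rho> (Suc r) = (\<Prod>i=1..Suc r. \<rho> i)"
  proof (cases "Suc r = l")
    case True
    then show ?thesis unfolding sig_def tau_def by simp
  next
    case False
    then show ?thesis using r sig_lt[of "Suc r" l] by simp
  qed
  also have "\<dots> = (\<Prod>i=1..r. \<rho> i) * \<rho> (Suc r)" by (simp add: prod.nat_ivl_Suc')
  finally show ?thesis using sig_lt[OF r] by simp
qed



lemma sig_ge1:
  assumes l: "l \<ge> 1" and rho: "\<forall>i\<in>{1..l}. \<rho> i > 1"
  shows "r \<le> l \<Longrightarrow> 1 \<le> sig l \<rho> r"
proof (induction r)
  case 0 then show ?case using sig_0[OF l] by simp
next
  case (Suc r)
  hence r: "r < l" by simp
  have "1 \<le> sig l \<rho> r" using Suc by simp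
  moreover have "\<rho> (Suc r) > 1" using rho r by simp
  ultimately have "1 * 1 \<le> sig l \<rho> r * \<rho> (Suc r)" by (intro mult_mono) auto
  thus ?case using sig_Suc[OF r] by simp
qed

lemma sig_strict:
  assumes l: "l \<ge> 1" and rho: "\<forall>i\<in>{1..l}. \<rho> i > 1"
  shows "r < r' \<Longrightarrow> r' \<le> l \<Longrightarrow> sig l \<rho> r < sig l \<rho> r'"
proof (induction r')
  case 0 then show ?case by simp
next
  case (Suc r')
  hence r: "r' < l" by simp
  have g: "1 \<le> sig l \<rho> r'" using sig_ge1[OF l rho] r by simp
  have "\<rho> (Suc r') > 1" using rho r by simp
  hence "sig l \<rho> r' < sig l \<rho> r' * \<rho> (Suc r')" using g by simp
  hence lt: "sig l \<rho> r' < sig l \<rho> (Suc r')" using sig_Suc[OF r] by simp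
  show ?case
  proof (cases "r = r'")
    case True then show ?thesis using lt by simp
  next
    case False
    hence "sig l \<rho> r < sig l \<rho> r'" using Suc by simp
    then show ?thesis using lt by simp
  qed
qed

lemma tau_gt1:
  assumes l: "l \<ge> 1" and rho: "\<forall>i\<in>{1..l}. \<rho> i > 1"
  shows "tau l \<rho> > 1"
  using sig_strict[OF l rho, of 0 l] sig_0[OF l] sig_l[OF l] l by simp

lemma sig_lt_tau:
  assumes l: "l \<ge> 1" and rho: "\<forall>i\<in>{1..l}. \<rho> i > 1"
  shows "r < l \<Longrightarrow> sig l \<rho> r < tau l \<rho>"
  using sig_strict[OF l rho, of r l] sig_l[OF l] by simp

lemma sig_le_tau:
  assumes l: "l \<ge> 1" and rho: "\<forall>i\<in>{1..l}. \<rho> i > 1"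
  shows "r \<le> l \<Longrightarrow> sig l \<rho> r \<le> tau l \<rho>"
  using sig_strict[OF l rho, of r l] sig_l[OF l] by (cases "r = l") auto

lemma div_eq_D: "(a::real) / b = c \<Longrightarrow> b \<noteq> 0 \<Longrightarrow> a = c * b"
  by (simp add: divide_eq_eq)

lemma cancel_s: "(s::real) \<ge> 1 \<Longrightarrow> s * a = s * b \<Longrightarrow> a = b"
  by simp

lemma part1:
  fixes l :: nat and \<alpha> \<rho> u v :: "nat \<Rightarrow> real"
  assumes l_pos: "l \<ge> 1"
    and alpha_nonneg: "\<forall>i\<in>{1..l}. \<alpha> i \<ge> 0"
    and rho_gt1: "\<forall>i\<in>{1..l}. \<rho> i > 1"
    and slopeA: "\<forall>t::int. \<forall>r<l. slope (segA l \<rho> u v t r) = \<alpha> (cyc l (r + 1))"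
    and slopeB: "\<forall>t::int. \<forall>r<l. slope (segB l \<rho> u v t r) = - real l"
    and rho_bound: "\<forall>r\<in>{1..l}. \<rho> r \<ge> (\<alpha> r + real l) / (\<alpha> (cyc l (r + 1)) + real l)"
  shows "\<forall>r<l. v r \<ge> u r"
proof -
  define T where "T = tau l \<rho>"
  have T1: "T > 1" unfolding T_def using tau_gt1[OF l_pos rho_gt1] .
  have eqA: "T * v r - u r = \<alpha> (r+1) * (T - 1)" if r: "r < l" for r
  proof -
    define s where "s = sig l \<rho> r"
    have s1: "s \<ge> 1" unfolding s_def using sig_ge1[OF l_pos rho_gt1] r by simp
    have "slope (segA l \<rho> u v 0 r) = \<alpha> (r+1)" using slopeA r cyc_lt[OF r] by simp
    moreover have "segA l \<rho> u v 0 r = ((s, s * u r), (T * s, T * s * v r))"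
      unfolding segA_def pa_def pb_def s_def T_def using r sig_rl[OF r] by simp
    ultimately have e: "(T * s * v r - s * u r) / (T * s - s) = \<alpha> (r+1)" unfolding slope_def by simp
    have "T * s - s > 0" using T1 s1 by (simp add: algebra_simps)
    hence d: "T * s - s \<noteq> 0" by linarith
    have "T * s * v r - s * u r = \<alpha> (r+1) * (T * s - s)" using div_eq_D[OF e d] by simp
    hence "s * (T * v r - u r) = s * (\<alpha> (r+1) * (T - 1))" by (simp add: algebra_simps)
    thus ?thesis by (rule cancel_s[OF s1])
  qed
  have eqB: "\<rho> (r+1) * u ((r+1) mod l) - v r = - real l * (\<rho> (r+1) - 1)" if r: "r < l" for r
  proof -
    define s where "s = sig l \<rho> r"
    have s1: "s \<ge> 1" unfolding s_def using sig_ge1[OF l_pos rho_gt1] r by simp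
    have p: "\<rho> (r+1) > 1" using rho_gt1 r by simp
    have "slope (segB l \<rho> u v 0 r) = - real l" using slopeB r by simp
    moreover have "segB l \<rho> u v 0 r = ((s, s * v r), (s * \<rho> (r+1), s * \<rho> (r+1) * u ((r+1) mod l)))"
      unfolding segB_def pa_def pb_def s_def using r sig_Suc[OF r] by simp
    ultimately have e: "(s * \<rho> (r+1) * u ((r+1) mod l) - s * v r) / (s * \<rho> (r+1) - s) = - real l"
      unfolding slope_def by simp
    have "s * \<rho> (r+1) - s > 0" using p s1 by (simp add: algebra_simps)
    hence d: "s * \<rho> (r+1) - s \<noteq> 0" by linarith
    have "s * \<rho> (r+1) * u ((r+1) mod l) - s * v r = - real l * (s * \<rho> (r+1) - s)" using div_eq_D[OF e d] by simp
    hence "s * (\<rho> (r+1) * u ((r+1) mod l) - v r) = s * (- real l * (\<rho> (r+1) - 1))" by (simp add: algebra_simps)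
    thus ?thesis by (rule cancel_s[OF s1])
  qed
  define z where "z r = v r - \<alpha> (r+1)" for r
  have zrec: "z r \<ge> \<rho> (r+1) * T * z ((r+1) mod l)" if r: "r < l" for r
  proof -
    define r' where "r' = (r+1) mod l"
    have r': "r' < l" unfolding r'_def using l_pos by simp
    have a': "\<alpha> (r'+1) \<ge> 0" using alpha_nonneg r' by simp
    have A': "T * v r' - u r' = \<alpha> (r'+1) * (T - 1)" using eqA[OF r'] .
    have B: "\<rho> (r+1) * u r' - v r = - real l * (\<rho> (r+1) - 1)" using eqB[OF r] unfolding r'_def .
    have bnd: "\<rho> (r+1) \<ge> (\<alpha> (r+1) + real l) / (\<alpha> (r'+1) + real l)"
    proof -
      have "r + 1 \<in> {1..l}" using r by simp
      hence "\<rho> (r+1) \<ge> (\<alpha> (r+1) + real l) / (\<alpha> (cyc l (r + 1 + 1)) + real l)"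
        using rho_bound by blast
      moreover have "cyc l (r + 1 + 1) = r' + 1" using cyc_lt2[OF r] unfolding r'_def
        by (simp add: numeral_2_eq_2)
      ultimately show ?thesis by simp
    qed
    have pos: "\<alpha> (r'+1) + real l > 0" using a' l_pos by simp
    have bnd2: "\<rho> (r+1) * (\<alpha> (r'+1) + real l) \<ge> \<alpha> (r+1) + real l"
      using bnd pos by (simp add: field_simps)
    have "z r = \<rho> (r+1) * T * z r' + (\<rho> (r+1) * (\<alpha> (r'+1) + real l) - (\<alpha> (r+1) + real l))"
    proof -
      have u': "u r' = T * v r' - \<alpha> (r'+1) * (T - 1)" using A' by linarith
      have vr: "v r = \<rho> (r+1) * u r' + real l * (\<rho> (r+1) - 1)" using B by linarith
      show ?thesis unfolding z_def vr u' by (simp add: algebra_simps)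
    qed
    thus ?thesis using bnd2 unfolding r'_def by simp
  qed
  have zle: "z r \<le> 0" if r: "r < l" for r
  proof (rule ccontr)
    assume "\<not> z r \<le> 0"
    hence zr: "z r > 0" by simp
    define M where "M = Max (z ` {..<l})"
    have fin: "finite (z ` {..<l})" "z ` {..<l} \<noteq> {}" using r by auto
    have "z r \<le> M" unfolding M_def using fin r by simp
    hence M0: "M > 0" using zr by simp
    obtain s0 where s0: "s0 < l" "z s0 = M" using Max_in[OF fin] unfolding M_def by auto
    define r0 where "r0 = (s0 + l - 1) mod l"
    have r0: "r0 < l" unfolding r0_def using l_pos by simp
    have "(r0 + 1) mod l = Suc (s0 + l - 1) mod l" unfolding r0_def by (simp add: mod_Suc_eq)
    also have "Suc (s0 + l - 1) = s0 + l" using l_pos by simp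
    also have "(s0 + l) mod l = s0" using s0 by simp
    finally have rr: "(r0 + 1) mod l = s0" .
    have p: "\<rho> (r0+1) > 1" using rho_gt1 r0 by simp
    have "\<rho> (r0+1) * T > 1" using p T1 by (rule less_1_mult)
    hence "\<rho> (r0+1) * T * M > M" using M0 by simp
    hence "z r0 > M" using zrec[OF r0] rr s0 by simp
    moreover have "z r0 \<le> M" unfolding M_def using fin r0 by simp
    ultimately show False by simp
  qed
  show ?thesis
  proof (intro allI impI)
    fix r assume r: "r < l"
    have "v r - u r = - (T - 1) * z r" using eqA[OF r] unfolding z_def by (simp add: algebra_simps)
    moreover have "- (T - 1) * z r \<ge> 0" using zle[OF r] T1 by (intro mult_nonpos_nonpos) auto
    ultimately show "u r \<le> v r" by simp
  qed
qed



locale geo =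
  fixes l :: nat and \<alpha> \<rho> u v :: "nat \<Rightarrow> real"
  assumes l_pos: "l \<ge> 1"
    and alpha_nonneg: "\<forall>i\<in>{1..l}. \<alpha> i \<ge> 0"
    and rho_gt1: "\<forall>i\<in>{1..l}. \<rho> i > 1"
    and slopeA: "\<forall>t::int. \<forall>r<l. slope (segA l \<rho> u v t r) = \<alpha> (cyc l (r + 1))"
    and slopeB: "\<forall>t::int. \<forall>r<l. slope (segB l \<rho> u v t r) = - real l"
    and uv: "\<forall>r<l. u r \<le> v r"
begin

abbreviation "T \<equiv> tau l \<rho>"
abbreviation "S r \<equiv> sig l \<rho> r"
abbreviation "P t \<equiv> T powi t"

definition LX :: "int \<Rightarrow> nat \<Rightarrow> real" where "LX t r = P t * S r"
definition RX :: "int \<Rightarrow> nat \<Rightarrow> bool \<Rightarrow> real" where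
  "RX t r k = (if k then P (t+1) * S r else P t * S (Suc r))"

lemma T1: "T > 1" using tau_gt1[OF l_pos rho_gt1] .
lemma Tpos: "T > 0" using T1 by simp
lemma P_pos: "P t > 0" using Tpos by simp
lemma P_Suc: "P (t+1) = P t * T" using Tpos by (simp add: power_int_add_1)
lemma P_mono: "t \<le> t' \<Longrightarrow> P t \<le> P t'" using T1 by (intro power_int_increasing) auto
lemma P_strict: "t < t' \<Longrightarrow> P t < P t'" using T1 by (intro power_int_strict_increasing) auto
lemma S_ge1: "r \<le> l \<Longrightarrow> 1 \<le> S r" using sig_ge1[OF l_pos rho_gt1] .
lemma S_lt: "r < l \<Longrightarrow> S r < T" using sig_lt_tau[OF l_pos rho_gt1] .
lemma S_le: "r \<le> l \<Longrightarrow> S r \<le> T" using sig_le_tau[OF l_pos rho_gt1] .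
lemma S_strict: "r < r' \<Longrightarrow> r' \<le> l \<Longrightarrow> S r < S r'" using sig_strict[OF l_pos rho_gt1] .
lemma S0: "S 0 = 1" using sig_0[OF l_pos] .
lemma Sl: "S l = T" using sig_l[OF l_pos] .

lemma uniq:
  assumes r: "r < l" "r' < l" and e: "P t * S r = P t' * S r'"
  shows "t = t' \<and> r = r'"
proof -
  have lt: False if tt: "t < t'" and r: "r < l" "r' < l" and e: "P t * S r = P t' * S r'" for t t' r r'
  proof -
    have "P t * S r < P t * T" using S_lt[OF r(1)] P_pos by simp
    also have "\<dots> = P (t+1)" using P_Suc by simp
    also have "\<dots> \<le> P t'" using tt by (intro P_mono) simp
    also have "\<dots> \<le> P t' * S r'" using S_ge1[of r'] r P_pos[of t'] by simp
    finally show False using e by simp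
  qed
  have "t = t'"
  proof (rule ccontr)
    assume "t \<noteq> t'"
    hence "t < t' \<or> t' < t" by auto
    thus False using lt r e by metis
  qed
  hence "S r = S r'" using e P_pos[of t] Tpos by simp
  have "r = r'"
  proof (rule ccontr)
    assume "r \<noteq> r'"
    hence "r < r' \<or> r' < r" by auto
    thus False using S_strict r \<open>S r = S r'\<close> by (metis less_imp_le order_less_irrefl)
  qed
  thus ?thesis using \<open>t = t'\<close> by simp
qed

lemma LX_lt_RX: "r < l \<Longrightarrow> LX t r < RX t r k"
proof -
  assume r: "r < l"
  show ?thesis
  proof (cases k)
    case True
    have "P t < P (t+1)" by (intro P_strict) simp
    thus ?thesis using True S_ge1[of r] r unfolding LX_def RX_def by simp
  next
    case False
    have "S r < S (Suc r)" using r by (intro S_strict) auto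
    thus ?thesis using False P_pos[of t] unfolding LX_def RX_def by simp
  qed
qed

lemma P_le_LX: "r < l \<Longrightarrow> P t \<le> LX t r"
  using S_ge1[of r] P_pos[of t] unfolding LX_def by simp

lemma LX_le: "r < l \<Longrightarrow> LX t r \<le> P t * T"
  using S_lt[of r] P_pos[of t] unfolding LX_def by simp

lemma RX_le: "r < l \<Longrightarrow> RX t r k \<le> P t * T * T"
proof -
  assume r: "r < l"
  show ?thesis
  proof (cases k)
    case True
    have "P (t+1) * S r \<le> P (t+1) * T" using S_lt[OF r] P_pos[of "t+1"] by simp
    thus ?thesis using True P_Suc unfolding RX_def by simp
  next
    case False
    have "P t * S (Suc r) \<le> P t * T" using S_le[of "Suc r"] r P_pos[of t] by simp
    also have "\<dots> \<le> P t * T * T" using T1 P_pos[of t] by simp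
    finally show ?thesis using False unfolding RX_def by simp
  qed
qed

lemma RX_E0: "r < l \<Longrightarrow> \<exists>t' r'. r' < l \<and> RX t r k = P t' * S r'"
proof -
  assume r: "r < l"
  show ?thesis
  proof (cases k)
    case True then show ?thesis unfolding RX_def using r by auto
  next
    case False
    show ?thesis
    proof (cases "Suc r < l")
      case True then show ?thesis using False unfolding RX_def by auto
    next
      case F2: False
      hence "Suc r = l" using r by simp
      hence "RX t r k = P (t+1) * S 0" using False P_Suc S0 Sl unfolding RX_def by simp
      thus ?thesis using l_pos by (intro exI[of _ "t+1"] exI[of _ 0]) simp
    qed
  qed
qed

lemma Tfin:
  assumes a: "a > 0"
  shows "finite {t. a \<le> P t \<and> P t \<le> b}"
proof -
  obtain N where N: "b < T ^ N" using real_arch_pow[OF T1] by blast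
  obtain M where M: "1 / a < T ^ M" using real_arch_pow[OF T1] by blast
  have "{t. a \<le> P t \<and> P t \<le> b} \<subseteq> {- int M .. int N}"
  proof
    fix t assume t: "t \<in> {t. a \<le> P t \<and> P t \<le> b}"
    have "t \<le> int N"
    proof (rule ccontr)
      assume "\<not> t \<le> int N"
      hence "P (int N) < P t" by (intro P_strict) simp
      thus False using N t by simp
    qed
    moreover have "- int M \<le> t"
    proof (rule ccontr)
      assume "\<not> - int M \<le> t"
      hence "P t < P (- int M)" by (intro P_strict) simp
      also have "\<dots> = 1 / T ^ M" by (simp add: power_int_minus_divide)
      also have "\<dots> < a" using M a Tpos by (simp add: field_simps)
      finally show False using t by simp
    qed
    ultimately show "t \<in> {- int M .. int N}" by simp
  qed
  thus ?thesis using finite_subset by blast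
qed

lemma floor_P:
  assumes x: "x > 0"
  shows "\<exists>t. P t \<le> x \<and> x < P (t+1)"
proof -
  define t where "t = \<lfloor>ln x / ln T\<rfloor>"
  have lT: "ln T > 0" using T1 by simp
  have Pexp: "P s = exp (real_of_int s * ln T)" for s
    using powr_real_of_int'[of T s] Tpos unfolding powr_def by simp
  have "real_of_int t \<le> ln x / ln T" unfolding t_def by simp
  hence "real_of_int t * ln T \<le> ln x" using lT by (simp add: pos_le_divide_eq)
  hence "P t \<le> x" unfolding Pexp using x by (metis exp_le_cancel_iff exp_ln)
  moreover have "ln x / ln T < real_of_int (t + 1)" unfolding t_def by linarith
  hence "ln x < real_of_int (t+1) * ln T" using lT by (simp add: pos_divide_less_eq)
  hence "x < P (t+1)" unfolding Pexp using x by (metis exp_less_cancel_iff exp_ln)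
  ultimately show ?thesis by blast
qed

end


context geo begin

lemma seg_fst: "fst (fst (seg l \<rho> u v t r k)) = LX t r"
  unfolding seg_def segA_def segB_def pa_def pb_def LX_def by simp

lemma PS_rl: "r < l \<Longrightarrow> P t * S (r + l) = P (t+1) * S r"
  using sig_rl[of r l \<rho>] P_Suc[of t] by simp

lemma seg_snd: "r < l \<Longrightarrow> fst (snd (seg l \<rho> u v t r k)) = RX t r k"
  unfolding seg_def segA_def segB_def pa_def pb_def RX_def
  using PS_rl by simp

lemma seg_slope: "r < l \<Longrightarrow> slope (seg l \<rho> u v t r k) = (if k then \<alpha> (r+1) else - real l)"
  unfolding seg_def using slopeA slopeB cyc_lt[of r l] by simp

lemma seg_yL: "r < l \<Longrightarrow> snd (fst (seg l \<rho> u v t r k)) = LX t r * (if k then u r else v r)"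
  unfolding seg_def segA_def segB_def pa_def pb_def LX_def by simp

lemma seg_yR: "r < l \<Longrightarrow> snd (snd (seg l \<rho> u v t r k)) =
    RX t r k * (if k then v r else u (Suc r mod l))"
  unfolding seg_def segA_def segB_def pa_def pb_def RX_def
  using PS_rl by simp

definition val :: "int \<times> nat \<times> bool \<Rightarrow> real \<Rightarrow> real" where
  "val j x = (case j of (t, r, k) \<Rightarrow> seg_val (seg l \<rho> u v t r k) x)"

definition sl :: "int \<times> nat \<times> bool \<Rightarrow> real" where
  "sl j = (case j of (t, r, k) \<Rightarrow> slope (seg l \<rho> u v t r k))"

lemma val_aff: "val j x = val j q + sl j * (x - q)"
  unfolding val_def sl_def seg_val_def by (cases j) (simp add: algebra_simps)

lemma val_L: "r < l \<Longrightarrow> val (t, r, k) (LX t r) = LX t r * (if k then u r else v r)"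
  unfolding val_def seg_val_def using seg_fst seg_yL by simp

lemma val_R: "r < l \<Longrightarrow> val (t, r, k) (RX t r k) = RX t r k * (if k then v r else u (Suc r mod l))"
proof -
  assume r: "r < l"
  define s where "s = seg l \<rho> u v t r k"
  have ne: "fst (snd s) - fst (fst s) \<noteq> 0" unfolding s_def using seg_fst seg_snd[OF r] LX_lt_RX[OF r, of t k] by simp
  have "val (t, r, k) (RX t r k) = seg_val s (fst (snd s))" unfolding val_def s_def using seg_snd[OF r] by simp
  also have "\<dots> = snd (snd s)" unfolding seg_val_def slope_def using ne by simp
  finally show ?thesis unfolding s_def using seg_yR[OF r] by simp
qed

lemma sl_eq: "r < l \<Longrightarrow> sl (t, r, k) = (if k then \<alpha> (r+1) else - real l)"
  unfolding sl_def using seg_slope by simp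

definition act :: "real \<Rightarrow> (int \<times> nat \<times> bool) set" where
  "act x = {(t, r, k). r < l \<and> LX t r \<le> x \<and> x < RX t r k}"

definition actm :: "real \<Rightarrow> (int \<times> nat \<times> bool) set" where
  "actm x = {(t, r, k). r < l \<and> LX t r < x \<and> x \<le> RX t r k}"

lemma cnt_eq: "cnt l \<rho> u v x y = card {j\<in>act x. val j x \<le> y}"
proof -
  have "{(t, r, k). r < l \<and>
      fst (fst (seg l \<rho> u v t r k)) \<le> x \<and> x < fst (snd (seg l \<rho> u v t r k)) \<and>
      seg_val (seg l \<rho> u v t r k) x \<le> y} = {j\<in>act x. val j x \<le> y}"
    unfolding act_def val_def using seg_fst seg_snd by auto
  thus ?thesis unfolding cnt_def by simp
qed

lemma Pfun_eq: "Pfun l \<rho> u v m x = ost (act x) (\<lambda>j. val j x) m"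
  unfolding Pfun_def ost_def cnt_eq by simp

lemma fin_act:
  assumes q: "q > 0"
  shows "finite (act q)" "finite (actm q)"
proof -
  define W where "W = {t. q / (T * T) \<le> P t \<and> P t \<le> q} \<times> {..<l} \<times> (UNIV :: bool set)"
  have fW: "finite W" unfolding W_def using Tfin[of "q / (T*T)" q] q Tpos by simp
  have sub: "j \<in> W" if j: "j = (t, r, k)" "r < l" "LX t r \<le> q" "q \<le> RX t r k" for j t r k
  proof -
    have "P t \<le> q" using P_le_LX[OF j(2), of t] j(3) by simp
    moreover have "q \<le> P t * (T * T)" using RX_le[OF j(2), of t k] j(4) by (simp add: mult.assoc)
    hence "q / (T * T) \<le> P t" using Tpos by (simp add: divide_le_eq)
    ultimately show ?thesis unfolding W_def using j by simp
  qed
  have "act q \<subseteq> W" unfolding act_def using sub by auto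
  thus "finite (act q)" using fW finite_subset by blast
  have "actm q \<subseteq> W" unfolding actm_def using sub by auto
  thus "finite (actm q)" using fW finite_subset by blast
qed

lemma card_act:
  assumes q: "q > 0"
  shows "l + 1 \<le> card (act q)"
proof -
  have "\<forall>r. \<exists>t. r < l \<longrightarrow> P t \<le> q / S r \<and> q / S r < P (t+1)"
  proof
    fix r
    show "\<exists>t. r < l \<longrightarrow> P t \<le> q / S r \<and> q / S r < P (t+1)"
    proof (cases "r < l")
      case True
      have "q / S r > 0" using q S_ge1[of r] True by simp
      then show ?thesis using floor_P by blast
    qed simp
  qed
  then obtain tt where tt: "\<And>r. r < l \<Longrightarrow> P (tt r) \<le> q / S r \<and> q / S r < P (tt r + 1)" by metis
  have A: "(tt r, r, True) \<in> act q" if r: "r < l" for r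
  proof -
    have s: "S r > 0" using S_ge1[of r] r by simp
    have "P (tt r) * S r \<le> q" using tt[OF r] s by (simp add: le_divide_eq)
    moreover have "q < P (tt r + 1) * S r" using tt[OF r] s by (simp add: divide_less_eq)
    ultimately show ?thesis unfolding act_def LX_def RX_def using r by simp
  qed
  obtain t0 where t0: "P t0 \<le> q" "q < P (t0+1)" using floor_P[OF q] by blast
  define R0 where "R0 = {r. r < l \<and> P t0 * S r \<le> q}"
  have fR0: "finite R0" unfolding R0_def by simp
  have "0 \<in> R0" unfolding R0_def using l_pos S0 t0 by simp
  hence neR0: "R0 \<noteq> {}" by auto
  define r0 where "r0 = Max R0"
  have r0R: "r0 \<in> R0" unfolding r0_def using fR0 neR0 by simp
  have r0l: "r0 < l" "P t0 * S r0 \<le> q" using r0R unfolding R0_def by auto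
  have B: "(t0, r0, False) \<in> act q"
  proof -
    have "q < P t0 * S (Suc r0)"
    proof (cases "Suc r0 < l")
      case True
      have "Suc r0 \<notin> R0"
      proof
        assume "Suc r0 \<in> R0"
        hence "Suc r0 \<le> r0" unfolding r0_def using fR0 by simp
        thus False by simp
      qed
      thus ?thesis unfolding R0_def using True by simp
    next
      case False
      hence "Suc r0 = l" using r0l by simp
      thus ?thesis using Sl t0 P_Suc by simp
    qed
    thus ?thesis unfolding act_def LX_def RX_def using r0l by simp
  qed
  define Z where "Z = insert (t0, r0, False) ((\<lambda>r. (tt r, r, True)) ` {..<l})"
  have "inj_on (\<lambda>r. (tt r, r, True)) {..<l}" by (rule inj_onI) simp
  hence c1: "card ((\<lambda>r. (tt r, r, True)) ` {..<l}) = l" by (simp add: card_image)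
  have "(t0, r0, False) \<notin> (\<lambda>r. (tt r, r, True)) ` {..<l}" by auto
  hence cZ: "card Z = l + 1" unfolding Z_def using c1 by simp
  have "Z \<subseteq> act q" unfolding Z_def using A B by auto
  hence "card Z \<le> card (act q)" using fin_act[OF q] by (intro card_mono) auto
  thus ?thesis using cZ by simp
qed

end


context geo begin

lemma ep_bounds: "r < l \<Longrightarrow> P t \<le> LX t r \<and> LX t r \<le> P t * T * T \<and> P t \<le> RX t r k \<and> RX t r k \<le> P t * T * T"
proof -
  assume r: "r < l"
  have a: "P t \<le> LX t r" using P_le_LX[OF r] .
  have "P t * T \<le> P t * T * T" using T1 P_pos[of t] by simp
  hence b: "LX t r \<le> P t * T * T" using LX_le[OF r, of t] by linarith
  have c: "LX t r < RX t r k" using LX_lt_RX[OF r] .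
  show ?thesis using a b c RX_le[OF r, of t k] by simp
qed

definition EF :: "real \<Rightarrow> real set" where
  "EF q = {e. \<exists>t r k. r < l \<and> (e = LX t r \<or> e = RX t r k) \<and> q / 2 \<le> e \<and> e \<le> 2 * q}"

lemma EF_fin: assumes q: "q > 0" shows "finite (EF q)"
proof -
  define W where "W = {t. q / (2 * T * T) \<le> P t \<and> P t \<le> 2 * q} \<times> {..<l} \<times> (UNIV :: bool set)"
  have fW: "finite W" unfolding W_def using Tfin[of "q / (2 * T * T)" "2 * q"] q Tpos by simp
  have "EF q \<subseteq> (\<lambda>(t, r, k). LX t r) ` W \<union> (\<lambda>(t, r, k). RX t r k) ` W"
  proof
    fix e assume "e \<in> EF q"
    then obtain t r k where e: "r < l" "e = LX t r \<or> e = RX t r k" "q / 2 \<le> e" "e \<le> 2 * q"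
      unfolding EF_def by blast
    have bd: "P t \<le> e" "e \<le> P t * T * T" using ep_bounds[OF e(1), of t k] e(2) by auto
    have "P t \<le> 2 * q" using bd e by simp
    moreover have "q / 2 \<le> P t * (T * T)" using bd e by (simp add: mult.assoc)
    hence "q / (2 * T * T) \<le> P t" using Tpos by (simp add: divide_le_eq mult.assoc)
    ultimately have "(t, r, k) \<in> W" unfolding W_def using e by simp
    show "e \<in> (\<lambda>(t, r, k). LX t r) ` W \<union> (\<lambda>(t, r, k). RX t r k) ` W"
    proof (cases "e = LX t r")
      case True
      hence "e \<in> (\<lambda>(t, r, k). LX t r) ` W" using \<open>(t, r, k) \<in> W\<close> by (intro image_eqI[of _ _ "(t, r, k)"]) auto
      thus ?thesis by blast
    next
      case False
      hence "e = RX t r k" using e(2) by simp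
      hence "e \<in> (\<lambda>(t, r, k). RX t r k) ` W" using \<open>(t, r, k) \<in> W\<close> by (intro image_eqI[of _ _ "(t, r, k)"]) auto
      thus ?thesis by blast
    qed
  qed
  moreover have "finite ((\<lambda>(t, r, k). LX t r) ` W \<union> (\<lambda>(t, r, k). RX t r k) ` W)" using fW by simp
  ultimately show ?thesis using finite_subset by blast
qed

lemma ev_right:
  assumes q: "q > 0"
  shows "eventually (\<lambda>x. act x = act q) (at_right q)"
proof -
  have e1: "eventually (\<lambda>x. x < 2 * q) (at_right q)"
    using order_tendstoD(2)[OF tendsto_ident_at, of q "2*q"] q by simp
  have e2: "eventually (\<lambda>x. \<forall>e\<in>EF q. q < e \<longrightarrow> x < e) (at_right q)"
  proof (rule eventually_ball_finite[OF EF_fin[OF q]], intro ballI)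
    fix e assume "e \<in> EF q"
    show "eventually (\<lambda>x. q < e \<longrightarrow> x < e) (at_right q)"
    proof (cases "q < e")
      case True
      then show ?thesis using order_tendstoD(2)[OF tendsto_ident_at, of q e] by (auto elim: eventually_mono)
    qed simp
  qed
  have e3: "eventually (\<lambda>x. q < x) (at_right q)" by (rule eventually_at_right_less)
  show ?thesis
  proof (rule eventually_mono[OF eventually_conj[OF e1 eventually_conj[OF e2 e3]]])
    fix x assume x: "x < 2 * q \<and> (\<forall>e\<in>EF q. q < e \<longrightarrow> x < e) \<and> q < x"
    have inF: "e \<in> EF q" if "r < l" "e = LX t r \<or> e = RX t r k" "q / 2 \<le> e" "e \<le> 2 * q" for e t r k
      unfolding EF_def using that by blast
    have iff: "(LX t r \<le> x \<and> x < RX t r k) \<longleftrightarrow> (LX t r \<le> q \<and> q < RX t r k)" if r: "r < l" for t r k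
    proof
      assume a: "LX t r \<le> x \<and> x < RX t r k"
      have "LX t r \<le> q"
      proof (rule ccontr)
        assume "\<not> LX t r \<le> q"
        hence "LX t r \<in> EF q" using inF[OF r, of "LX t r" t k] a x q by simp
        hence "q < LX t r \<longrightarrow> x < LX t r" using x by blast
        thus False using a \<open>\<not> LX t r \<le> q\<close> by linarith
      qed
      thus "LX t r \<le> q \<and> q < RX t r k" using a x by simp
    next
      assume a: "LX t r \<le> q \<and> q < RX t r k"
      have "x < RX t r k"
      proof (rule ccontr)
        assume "\<not> x < RX t r k"
        hence "RX t r k \<in> EF q" using inF[OF r, of "RX t r k" t k] a x q by simp
        hence "q < RX t r k \<longrightarrow> x < RX t r k" using x by blast
        thus False using a \<open>\<not> x < RX t r k\<close> by linarith
      qed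
      thus "LX t r \<le> x \<and> x < RX t r k" using a x by simp
    qed
    show "act x = act q" unfolding act_def using iff by auto
  qed
qed

lemma ev_left:
  assumes q: "q > 0"
  shows "eventually (\<lambda>x. act x = actm q) (at_left q)"
proof -
  have e1: "eventually (\<lambda>x. q / 2 < x) (at_left q)"
    using order_tendstoD(1)[OF tendsto_ident_at, of "q/2" q] q by simp
  have e2: "eventually (\<lambda>x. \<forall>e\<in>EF q. e < q \<longrightarrow> e < x) (at_left q)"
  proof (rule eventually_ball_finite[OF EF_fin[OF q]], intro ballI)
    fix e assume "e \<in> EF q"
    show "eventually (\<lambda>x. e < q \<longrightarrow> e < x) (at_left q)"
    proof (cases "e < q")
      case True
      then show ?thesis using order_tendstoD(1)[OF tendsto_ident_at, of e q] by (auto elim: eventually_mono)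
    qed simp
  qed
  have e3: "eventually (\<lambda>x. x < q) (at_left q)" unfolding eventually_at_filter by simp
  show ?thesis
  proof (rule eventually_mono[OF eventually_conj[OF e1 eventually_conj[OF e2 e3]]])
    fix x assume x: "q / 2 < x \<and> (\<forall>e\<in>EF q. e < q \<longrightarrow> e < x) \<and> x < q"
    have inF: "e \<in> EF q" if "r < l" "e = LX t r \<or> e = RX t r k" "q / 2 \<le> e" "e \<le> 2 * q" for e t r k
      unfolding EF_def using that by blast
    have iff: "(LX t r \<le> x \<and> x < RX t r k) \<longleftrightarrow> (LX t r < q \<and> q \<le> RX t r k)" if r: "r < l" for t r k
    proof
      assume a: "LX t r \<le> x \<and> x < RX t r k"
      have "q \<le> RX t r k"
      proof (rule ccontr)
        assume "\<not> q \<le> RX t r k"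
        hence "RX t r k \<in> EF q" using inF[OF r, of "RX t r k" t k] a x q by simp
        hence "RX t r k < q \<longrightarrow> RX t r k < x" using x by blast
        thus False using a \<open>\<not> q \<le> RX t r k\<close> by linarith
      qed
      thus "LX t r < q \<and> q \<le> RX t r k" using a x by simp
    next
      assume a: "LX t r < q \<and> q \<le> RX t r k"
      have "LX t r \<le> x"
      proof (rule ccontr)
        assume "\<not> LX t r \<le> x"
        hence "LX t r \<in> EF q" using inF[OF r, of "LX t r" t k] a x q by simp
        hence "LX t r < q \<longrightarrow> LX t r < x" using x by blast
        thus False using a \<open>\<not> LX t r \<le> x\<close> by linarith
      qed
      thus "LX t r \<le> x \<and> x < RX t r k" using a x by simp
    qed
    show "act x = actm q" unfolding act_def actm_def using iff by auto
  qed
qed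

end


context geo begin

definition CC :: "real \<Rightarrow> (int \<times> nat \<times> bool) set" where
  "CC q = {(t, r, k). r < l \<and> LX t r < q \<and> q < RX t r k}"
definition Lq :: "real \<Rightarrow> (int \<times> nat \<times> bool) set" where
  "Lq q = {(t, r, k). r < l \<and> LX t r = q}"
definition Rq :: "real \<Rightarrow> (int \<times> nat \<times> bool) set" where
  "Rq q = {(t, r, k). r < l \<and> RX t r k = q}"

lemma act_split: "act q = CC q \<union> Lq q" "CC q \<inter> Lq q = {}"
  unfolding act_def CC_def Lq_def using LX_lt_RX by fastforce+

lemma actm_split: "actm q = CC q \<union> Rq q" "CC q \<inter> Rq q = {}"
  unfolding actm_def CC_def Rq_def using LX_lt_RX by fastforce+

lemma split_sums:
  fixes G :: "int \<times> nat \<times> bool \<Rightarrow> 'a::comm_monoid_add"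
  assumes q: "q > 0"
  shows "sum G (act q) = sum G (CC q) + sum G (Lq q)"
    and "sum G (actm q) = sum G (CC q) + sum G (Rq q)"
proof -
  have f1: "finite (CC q)" "finite (Lq q)" using fin_act(1)[OF q] act_split(1)[of q] by (auto intro: finite_subset)
  show "sum G (act q) = sum G (CC q) + sum G (Lq q)"
    unfolding act_split(1) using f1 act_split(2)[of q] by (simp add: sum.union_disjoint)
  have f2: "finite (Rq q)" using fin_act(2)[OF q] actm_split(1)[of q] by (auto intro: finite_subset)
  show "sum G (actm q) = sum G (CC q) + sum G (Rq q)"
    unfolding actm_split(1) using f1 f2 actm_split(2)[of q] by (simp add: sum.union_disjoint)
qed

lemma LR_cases:
  assumes q: "q > 0"
  shows "(Lq q = {} \<and> Rq q = {}) \<or>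
    (\<exists>a1 a2 b1 b2 r0. r0 < l \<and> Lq q = {a1, a2} \<and> Rq q = {b1, b2} \<and> a1 \<noteq> a2 \<and> b1 \<noteq> b2 \<and>
      val a1 q = q * u r0 \<and> val a2 q = q * v r0 \<and> val b1 q = q * v r0 \<and> val b2 q = q * u r0 \<and>
      sl a1 = \<alpha> (r0+1) \<and> sl a2 = - real l \<and> sl b1 = \<alpha> (r0+1) \<and> sl b2 = - real l)"
proof (cases "\<exists>t0 r0. r0 < l \<and> q = LX t0 r0")
  case False
  have "Lq q = {}" unfolding Lq_def using False by auto
  moreover have "Rq q = {}"
  proof -
    have "RX t r k \<noteq> q" if "r < l" for t r k
      using RX_E0[OF that, of t k] False unfolding LX_def by metis
    thus ?thesis unfolding Rq_def by auto
  qed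
  ultimately show ?thesis by simp
next
  case True
  then obtain t0 r0 where r0: "r0 < l" and qe: "q = LX t0 r0" by blast
  define pre where "pre = (if r0 = 0 then (t0 - 1, l - 1, False) else (t0, r0 - 1, False))"
  define a1 where "a1 = (t0, r0, True)"
  define a2 where "a2 = (t0, r0, False)"
  define b1 where "b1 = (t0 - 1, r0, True)"
  have qP: "q = P t0 * S r0" using qe unfolding LX_def .
  have L: "Lq q = {a1, a2}"
  proof (intro set_eqI iffI)
    fix j assume "j \<in> Lq q"
    then obtain t r k where j: "j = (t, r, k)" "r < l" "P t * S r = P t0 * S r0"
      unfolding Lq_def LX_def qP by blast
    have "t = t0 \<and> r = r0" using uniq[OF j(2) r0 j(3)] .
    thus "j \<in> {a1, a2}" unfolding a1_def a2_def using j by (cases k) auto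
  next
    fix j assume "j \<in> {a1, a2}"
    thus "j \<in> Lq q" unfolding a1_def a2_def Lq_def using r0 qe by auto
  qed
  have RXb1: "RX (t0 - 1) r0 True = q" unfolding RX_def qP by simp
  have RXpre: "RX (fst pre) (fst (snd pre)) False = q \<and> fst (snd pre) < l \<and> snd (snd pre) = False
      \<and> u (Suc (fst (snd pre)) mod l) = u r0"
  proof (cases "r0 = 0")
    case True
    have "RX (t0 - 1) (l - 1) False = P (t0 - 1) * S l" unfolding RX_def using l_pos by simp
    also have "\<dots> = P (t0 - 1 + 1)" using Sl P_Suc[of "t0 - 1"] by simp
    finally have "RX (t0 - 1) (l - 1) False = q" using qP True S0 by simp
    moreover have "Suc (l - 1) mod l = 0" using l_pos by simp
    ultimately show ?thesis unfolding pre_def using True l_pos by simp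
  next
    case False
    have "RX t0 (r0 - 1) False = q" unfolding RX_def qP using False by simp
    moreover have "Suc (r0 - 1) mod l = r0" using False r0 by simp
    ultimately show ?thesis unfolding pre_def using False r0 by simp
  qed
  have R: "Rq q = {b1, pre}"
  proof (intro set_eqI iffI)
    fix j assume "j \<in> Rq q"
    then obtain t r k where j: "j = (t, r, k)" "r < l" "RX t r k = q"
      unfolding Rq_def by blast
    show "j \<in> {b1, pre}"
    proof (cases k)
      case True
      hence "P (t+1) * S r = P t0 * S r0" using j qP unfolding RX_def by simp
      hence "t + 1 = t0 \<and> r = r0" using uniq[OF j(2) r0] by blast
      thus ?thesis unfolding b1_def using j True by auto
    next
      case False
      hence e: "P t * S (Suc r) = P t0 * S r0" using j qP unfolding RX_def by simp
      show ?thesis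
      proof (cases "Suc r < l")
        case True
        hence "t = t0 \<and> Suc r = r0" using uniq[OF True r0 e] by blast
        thus ?thesis unfolding pre_def using j False by auto
      next
        case F2: False
        hence "Suc r = l" using j by simp
        hence "P (t+1) * S 0 = P t0 * S r0" using e Sl S0 P_Suc by simp
        hence "t + 1 = t0 \<and> 0 = r0" using uniq[OF _ r0] l_pos by auto
        thus ?thesis unfolding pre_def using j False \<open>Suc r = l\<close> by auto
      qed
    qed
  next
    fix j assume "j \<in> {b1, pre}"
    thus "j \<in> Rq q"
    proof
      assume "j = b1" thus "j \<in> Rq q" unfolding b1_def Rq_def using r0 RXb1 by simp
    next
      assume "j \<in> {pre}"
      hence "j = (fst pre, fst (snd pre), False)" using RXpre by (cases pre) auto
      thus "j \<in> Rq q" unfolding Rq_def using RXpre by simp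
    qed
  qed
  have v1: "val a1 q = q * u r0" unfolding a1_def qe using val_L[OF r0] by simp
  have v2: "val a2 q = q * v r0" unfolding a2_def qe using val_L[OF r0] by simp
  have v3: "val b1 q = q * v r0" unfolding b1_def using val_R[OF r0, of "t0-1" True] RXb1 by simp
  have v4: "val pre q = q * u r0"
  proof -
    have "pre = (fst pre, fst (snd pre), False)" using RXpre by (cases pre) auto
    hence "val pre q = val (fst pre, fst (snd pre), False) (RX (fst pre) (fst (snd pre)) False)"
      using RXpre by simp
    also have "\<dots> = q * u r0" using val_R[of "fst (snd pre)" "fst pre" False] RXpre by simp
    finally show ?thesis .
  qed
  have s4: "sl pre = - real l"
  proof -
    have "pre = (fst pre, fst (snd pre), False)" using RXpre by (cases pre) auto
    thus ?thesis using sl_eq[of "fst (snd pre)" "fst pre" False] RXpre by simp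
  qed
  have s123: "sl a1 = \<alpha> (r0+1)" "sl a2 = - real l" "sl b1 = \<alpha> (r0+1)"
    unfolding a1_def a2_def b1_def using sl_eq[OF r0] by auto
  have d: "a1 \<noteq> a2" "b1 \<noteq> pre" unfolding a1_def a2_def b1_def using RXpre by (auto simp: pre_def)
  show ?thesis
    using r0 L R d v1 v2 v3 v4 s123 s4 by blast
qed

end


lemma side:
  fixes f0 b :: "'j \<Rightarrow> real" and F :: "real filter"
  assumes fin: "finite J" and Kdef: "K = {j\<in>J. f0 j \<le> \<theta>}" and cK: "card K = i"
    and lim: "((\<lambda>x. x) \<longlongrightarrow> q) F"
  shows "eventually (\<lambda>x. (\<Sum>m=1..i. ost J (\<lambda>j. f0 j + b j * (x - q)) m)
            = (\<Sum>j\<in>K. f0 j) + (\<Sum>j\<in>K. b j) * (x - q)) F"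
proof -
  have KJ: "K \<subseteq> J" unfolding Kdef by auto
  have finK: "finite K" using fin KJ finite_subset by auto
  have finJK: "finite (J - K)" using fin by simp
  have ev: "eventually (\<lambda>x. \<forall>a\<in>K. \<forall>c\<in>J-K. f0 a + b a * (x - q) < f0 c + b c * (x - q)) F"
  proof (rule eventually_ball_finite[OF finK], intro ballI)
    fix a assume a: "a \<in> K"
    show "eventually (\<lambda>x. \<forall>c\<in>J-K. f0 a + b a * (x - q) < f0 c + b c * (x - q)) F"
    proof (rule eventually_ball_finite[OF finJK], intro ballI)
      fix c assume c: "c \<in> J - K"
      have lt: "f0 a < f0 c" using a c unfolding Kdef by auto
      have l1: "((\<lambda>x. x - q) \<longlongrightarrow> q - q) F" by (rule tendsto_diff[OF lim tendsto_const])
      have "((\<lambda>x. (f0 c - f0 a) + (b c - b a) * (x - q)) \<longlongrightarrow> (f0 c - f0 a) + (b c - b a) * (q - q)) F"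
        by (rule tendsto_add[OF tendsto_const tendsto_mult[OF tendsto_const l1]])
      hence "((\<lambda>x. (f0 c - f0 a) + (b c - b a) * (x - q)) \<longlongrightarrow> f0 c - f0 a) F" by simp
      hence "eventually (\<lambda>x. 0 < (f0 c - f0 a) + (b c - b a) * (x - q)) F"
        using lt by (intro order_tendstoD(1)) auto
      thus "eventually (\<lambda>x. f0 a + b a * (x - q) < f0 c + b c * (x - q)) F"
        by (rule eventually_mono) (simp add: algebra_simps)
    qed
  qed
  show ?thesis
  proof (rule eventually_mono[OF ev])
    fix x assume sep: "\<forall>a\<in>K. \<forall>c\<in>J-K. f0 a + b a * (x - q) < f0 c + b c * (x - q)"
    define g where "g j = f0 j + b j * (x - q)" for j
    have "(\<Sum>m=1..i. ost J g m) = (\<Sum>m=1..i. ost K g m)"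
    proof (rule sum.cong[OF refl])
      fix m assume "m \<in> {1..i}"
      hence "m \<le> card K" using cK by simp
      show "ost J g m = ost K g m"
        by (rule ost_restrict[OF fin KJ \<open>m \<le> card K\<close>]) (use sep in \<open>simp add: g_def\<close>)
    qed
    also have "\<dots> = (\<Sum>j\<in>K. g j)" using ost_sum[OF finK, of g] cK by simp
    also have "\<dots> = (\<Sum>j\<in>K. f0 j) + (\<Sum>j\<in>K. b j) * (x - q)"
      unfolding g_def by (simp add: sum.distrib sum_distrib_right)
    finally show "(\<Sum>m=1..i. ost J (\<lambda>j. f0 j + b j * (x - q)) m) = (\<Sum>j\<in>K. f0 j) + (\<Sum>j\<in>K. b j) * (x - q)"
      unfolding g_def .
  qed
qed

lemma deriv_ev:
  fixes f :: "real \<Rightarrow> real"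
  assumes ev: "eventually (\<lambda>x. f x = c + d * (x - q)) (at q within S)" and fq: "f q = c"
  shows "(f has_real_derivative d) (at q within S)"
  unfolding has_field_derivative_iff
proof (rule tendsto_eventually)
  have "eventually (\<lambda>x. x \<noteq> q) (at q within S)" by (simp add: eventually_at_filter)
  thus "eventually (\<lambda>x. (f x - f q) / (x - q) = d) (at q within S)"
    using ev by eventually_elim (simp add: fq)
qed

lemma card_filter_sum: "finite A \<Longrightarrow> card {j\<in>A. P j} = (\<Sum>j\<in>A. if P j then 1 else 0)"
  by (simp add: sum.inter_filter[symmetric])

lemma sum_filter_if: "finite A \<Longrightarrow> (\<Sum>j\<in>{j\<in>A. P j}. g j) = (\<Sum>j\<in>A. if P j then g j else 0)"
  by (simp add: sum.inter_filter)



context geo begin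

lemma K5:
  assumes q: "q > 0"
  shows "card {j\<in>actm q. val j q \<le> \<theta>} = card {j\<in>act q. val j q \<le> \<theta>}"
    and "(\<Sum>j\<in>{j\<in>actm q. val j q \<le> \<theta>}. val j q) = (\<Sum>j\<in>{j\<in>act q. val j q \<le> \<theta>}. val j q)"
    and "(\<Sum>j\<in>{j\<in>actm q. val j q \<le> \<theta>}. sl j) \<le> (\<Sum>j\<in>{j\<in>act q. val j q \<le> \<theta>}. sl j)"
proof -
  note fa = fin_act[OF q]
  define H1 where "H1 j = (if val j q \<le> \<theta> then 1 else (0::nat))" for j
  define H2 where "H2 j = (if val j q \<le> \<theta> then val j q else 0)" for j
  define H3 where "H3 j = (if val j q \<le> \<theta> then sl j else 0)" for j
  have e1: "card {j\<in>actm q. val j q \<le> \<theta>} = sum H1 (CC q) + sum H1 (Rq q)"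
           "card {j\<in>act q. val j q \<le> \<theta>} = sum H1 (CC q) + sum H1 (Lq q)"
  proof -
    have "card {j\<in>actm q. val j q \<le> \<theta>} = sum H1 (actm q)" unfolding H1_def by (rule card_filter_sum[OF fa(2)])
    thus "card {j\<in>actm q. val j q \<le> \<theta>} = sum H1 (CC q) + sum H1 (Rq q)" using split_sums(2)[OF q, of H1] by simp
    have "card {j\<in>act q. val j q \<le> \<theta>} = sum H1 (act q)" unfolding H1_def by (rule card_filter_sum[OF fa(1)])
    thus "card {j\<in>act q. val j q \<le> \<theta>} = sum H1 (CC q) + sum H1 (Lq q)" using split_sums(1)[OF q, of H1] by simp
  qed
  have e2: "(\<Sum>j\<in>{j\<in>actm q. val j q \<le> \<theta>}. val j q) = sum H2 (CC q) + sum H2 (Rq q)"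
           "(\<Sum>j\<in>{j\<in>act q. val j q \<le> \<theta>}. val j q) = sum H2 (CC q) + sum H2 (Lq q)"
  proof -
    have "(\<Sum>j\<in>{j\<in>actm q. val j q \<le> \<theta>}. val j q) = sum H2 (actm q)" unfolding H2_def by (rule sum_filter_if[OF fa(2)])
    thus "(\<Sum>j\<in>{j\<in>actm q. val j q \<le> \<theta>}. val j q) = sum H2 (CC q) + sum H2 (Rq q)" using split_sums(2)[OF q, of H2] by simp
    have "(\<Sum>j\<in>{j\<in>act q. val j q \<le> \<theta>}. val j q) = sum H2 (act q)" unfolding H2_def by (rule sum_filter_if[OF fa(1)])
    thus "(\<Sum>j\<in>{j\<in>act q. val j q \<le> \<theta>}. val j q) = sum H2 (CC q) + sum H2 (Lq q)" using split_sums(1)[OF q, of H2] by simp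
  qed
  have e3: "(\<Sum>j\<in>{j\<in>actm q. val j q \<le> \<theta>}. sl j) = sum H3 (CC q) + sum H3 (Rq q)"
           "(\<Sum>j\<in>{j\<in>act q. val j q \<le> \<theta>}. sl j) = sum H3 (CC q) + sum H3 (Lq q)"
  proof -
    have "(\<Sum>j\<in>{j\<in>actm q. val j q \<le> \<theta>}. sl j) = sum H3 (actm q)" unfolding H3_def by (rule sum_filter_if[OF fa(2)])
    thus "(\<Sum>j\<in>{j\<in>actm q. val j q \<le> \<theta>}. sl j) = sum H3 (CC q) + sum H3 (Rq q)" using split_sums(2)[OF q, of H3] by simp
    have "(\<Sum>j\<in>{j\<in>act q. val j q \<le> \<theta>}. sl j) = sum H3 (act q)" unfolding H3_def by (rule sum_filter_if[OF fa(1)])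
    thus "(\<Sum>j\<in>{j\<in>act q. val j q \<le> \<theta>}. sl j) = sum H3 (CC q) + sum H3 (Lq q)" using split_sums(1)[OF q, of H3] by simp
  qed
  have "sum H1 (Rq q) = sum H1 (Lq q) \<and> sum H2 (Rq q) = sum H2 (Lq q) \<and> sum H3 (Rq q) \<le> sum H3 (Lq q)"
    using LR_cases[OF q]
  proof
    assume "Lq q = {} \<and> Rq q = {}" thus ?thesis by simp
  next
    assume "\<exists>a1 a2 b1 b2 r0. r0 < l \<and> Lq q = {a1, a2} \<and> Rq q = {b1, b2} \<and> a1 \<noteq> a2 \<and> b1 \<noteq> b2 \<and>
      val a1 q = q * u r0 \<and> val a2 q = q * v r0 \<and> val b1 q = q * v r0 \<and> val b2 q = q * u r0 \<and>
      sl a1 = \<alpha> (r0+1) \<and> sl a2 = - real l \<and> sl b1 = \<alpha> (r0+1) \<and> sl b2 = - real l"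
    then obtain a1 a2 b1 b2 r0 where h: "r0 < l" "Lq q = {a1, a2}" "Rq q = {b1, b2}" "a1 \<noteq> a2" "b1 \<noteq> b2"
      "val a1 q = q * u r0" "val a2 q = q * v r0" "val b1 q = q * v r0" "val b2 q = q * u r0"
      "sl a1 = \<alpha> (r0+1)" "sl a2 = - real l" "sl b1 = \<alpha> (r0+1)" "sl b2 = - real l" by blast
    have s: "sum H (Lq q) = H a1 + H a2" "sum H (Rq q) = H b1 + H b2" for H :: "_ \<Rightarrow> 'b::comm_monoid_add"
      using h by simp_all
    have quv: "q * u r0 \<le> q * v r0" using uv h(1) q by simp
    have al: "\<alpha> (r0+1) \<ge> 0" using alpha_nonneg h(1) by simp
    have c3: "H3 b1 + H3 b2 \<le> H3 a1 + H3 a2"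
    proof (cases "q * v r0 \<le> \<theta>")
      case True
      hence "q * u r0 \<le> \<theta>" using quv by linarith
      thus ?thesis unfolding H3_def using h True by simp
    next
      case False
      show ?thesis
      proof (cases "q * u r0 \<le> \<theta>")
        case True
        thus ?thesis unfolding H3_def using h False al by simp
      next
        case F2: False
        thus ?thesis unfolding H3_def using h False by simp
      qed
    qed
    show ?thesis unfolding s using c3 by (simp add: H1_def H2_def h add.commute)
  qed
  thus "card {j\<in>actm q. val j q \<le> \<theta>} = card {j\<in>act q. val j q \<le> \<theta>}"
    and "(\<Sum>j\<in>{j\<in>actm q. val j q \<le> \<theta>}. val j q) = (\<Sum>j\<in>{j\<in>act q. val j q \<le> \<theta>}. val j q)"
    and "(\<Sum>j\<in>{j\<in>actm q. val j q \<le> \<theta>}. sl j) \<le> (\<Sum>j\<in>{j\<in>act q. val j q \<le> \<theta>}. sl j)"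
    using e1 e2 e3 by simp_all
qed

end


context geo begin

lemma geo_proper: "proper l \<rho> u v"
  unfolding proper_def
proof (intro allI impI ballI)
  fix q :: real and i :: nat
  assume q: "q > 0" and i: "i \<in> {1..l}" and gap: "Pfun l \<rho> u v i q < Pfun l \<rho> u v (i + 1) q"
  define J where "J = act q"
  define Jm where "Jm = actm q"
  define f0 where "f0 j = val j q" for j
  have finJ: "finite J" "finite Jm" unfolding J_def Jm_def using fin_act[OF q] by auto
  have cJ: "i + 1 \<le> card J" unfolding J_def using card_act[OF q] i by simp
  have Pq: "Pfun l \<rho> u v m q = ost J f0 m" for m unfolding Pfun_eq J_def f0_def by simp
  define \<theta> where "\<theta> = ost J f0 i"
  define K where "K = {j\<in>J. f0 j \<le> \<theta>}"
  define Km where "Km = {j\<in>Jm. f0 j \<le> \<theta>}"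
  have i1: "1 \<le> i" using i by simp
  have cK: "card K = i" unfolding K_def \<theta>_def using ost_gap[OF finJ(1) i1 cJ] gap unfolding Pq by simp
  have cKm: "card Km = i" using K5(1)[OF q, of \<theta>] cK unfolding Km_def K_def J_def Jm_def f0_def by simp
  have sumv: "(\<Sum>j\<in>Km. f0 j) = (\<Sum>j\<in>K. f0 j)"
    using K5(2)[OF q, of \<theta>] unfolding Km_def K_def J_def Jm_def f0_def by simp
  have suml: "(\<Sum>j\<in>Km. sl j) \<le> (\<Sum>j\<in>K. sl j)"
    using K5(3)[OF q, of \<theta>] unfolding Km_def K_def J_def Jm_def f0_def by simp
  have Psq: "Psum l \<rho> u v i q = (\<Sum>j\<in>K. f0 j)"
  proof -
    have KJ: "K \<subseteq> J" unfolding K_def by auto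
    have "Psum l \<rho> u v i q = (\<Sum>m=1..i. ost J f0 m)" unfolding Psum_def Pq by simp
    also have "\<dots> = (\<Sum>m=1..i. ost K f0 m)"
    proof (rule sum.cong[OF refl])
      fix m assume "m \<in> {1..i}"
      hence "m \<le> card K" using cK by simp
      show "ost J f0 m = ost K f0 m"
        by (rule ost_restrict[OF finJ(1) KJ \<open>m \<le> card K\<close>]) (auto simp: K_def)
    qed
    also have "\<dots> = (\<Sum>j\<in>K. f0 j)" using ost_sum[of K f0] finJ(1) KJ cK finite_subset by metis
    finally show ?thesis .
  qed
  have Pside: "Psum l \<rho> u v i x = (\<Sum>m=1..i. ost A (\<lambda>j. f0 j + sl j * (x - q)) m)"
    if "act x = A" for x A
  proof -
    have "Pfun l \<rho> u v m x = ost A (\<lambda>j. f0 j + sl j * (x - q)) m" for m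
      unfolding Pfun_eq that f0_def using val_aff[of _ x q] by simp
    thus ?thesis unfolding Psum_def by simp
  qed
  have evR: "eventually (\<lambda>x. Psum l \<rho> u v i x = (\<Sum>j\<in>K. f0 j) + (\<Sum>j\<in>K. sl j) * (x - q)) (at_right q)"
  proof -
    have s: "eventually (\<lambda>x. (\<Sum>m=1..i. ost J (\<lambda>j. f0 j + sl j * (x - q)) m)
            = (\<Sum>j\<in>K. f0 j) + (\<Sum>j\<in>K. sl j) * (x - q)) (at_right q)"
      by (rule side[OF finJ(1) K_def cK tendsto_ident_at])
    show ?thesis using s ev_right[OF q] unfolding J_def[symmetric]
      by eventually_elim (simp add: Pside)
  qed
  have evL: "eventually (\<lambda>x. Psum l \<rho> u v i x = (\<Sum>j\<in>Km. f0 j) + (\<Sum>j\<in>Km. sl j) * (x - q)) (at_left q)"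
  proof -
    have s: "eventually (\<lambda>x. (\<Sum>m=1..i. ost Jm (\<lambda>j. f0 j + sl j * (x - q)) m)
            = (\<Sum>j\<in>Km. f0 j) + (\<Sum>j\<in>Km. sl j) * (x - q)) (at_left q)"
      by (rule side[OF finJ(2) Km_def cKm tendsto_ident_at])
    show ?thesis using s ev_left[OF q] unfolding Jm_def[symmetric]
      by eventually_elim (simp add: Pside)
  qed
  have dR: "(Psum l \<rho> u v i has_real_derivative (\<Sum>j\<in>K. sl j)) (at_right q)"
    by (rule deriv_ev[OF evR Psq])
  have dL: "(Psum l \<rho> u v i has_real_derivative (\<Sum>j\<in>Km. sl j)) (at_left q)"
    by (rule deriv_ev[OF evL]) (simp add: Psq sumv)
  show "\<exists>dl dr. (Psum l \<rho> u v i has_real_derivative dl) (at_left q) \<and>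
               (Psum l \<rho> u v i has_real_derivative dr) (at_right q) \<and> dl \<le> dr"
    using dL dR suml by blast
qed

end

theorem mainTheorem5:
  fixes l :: nat and \<alpha> \<rho> u v :: "nat \<Rightarrow> real"
  assumes l_pos: "l \<ge> 1"
    and alpha_nonneg: "\<forall>i\<in>{1..l}. \<alpha> i \<ge> 0"
    and alpha_sum: "(\<Sum>i=1..l. \<alpha> i) = real l"
    and rho_gt1: "\<forall>i\<in>{1..l}. \<rho> i > 1"
    and slopeA: "\<forall>t::int. \<forall>r<l. slope (segA l \<rho> u v t r) = \<alpha> (cyc l (r + 1))"
    and slopeB: "\<forall>t::int. \<forall>r<l. slope (segB l \<rho> u v t r) = - real l"
    and rho_bound: "\<forall>r\<in>{1..l}. \<rho> r \<ge> (\<alpha> r + real l) / (\<alpha> (cyc l (r + 1)) + real l)"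
  shows "(\<forall>r<l. v r \<ge> u r) \<and> proper l \<rho> u v"
proof -
  have uv: "\<forall>r<l. v r \<ge> u r"
    using part1[OF l_pos alpha_nonneg rho_gt1 slopeA slopeB rho_bound] .
  interpret geo l \<alpha> \<rho> u v
    using l_pos alpha_nonneg rho_gt1 slopeA slopeB uv by unfold_locales auto
  show ?thesis using uv geo_proper by simp
qed


end
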